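(* Let $R$ be a commutative ring with unit, let $Q=(V,E,X,s,t,l)$ be a labelled quiver with labels $X$ and let $F\subseteq R\langle X\rangle_Q$. Then for any $f\in R\langle X\rangle$ the following are equivalent: (1) $f$ is compatible with $Q$ and lies in the two-sided ideal generated by $F$; (2) $f$ is compatible with $Q$ and can be rewritten to zero using $F$; (3) $f$ is a $Q$-consequence of $F$.
   Context: $R\langle X\rangle$ is the free algebra of noncommutative polynomials over $R$ in indeterminates $X$, with monomials the words in $\langle X\rangle$ (including the empty word $1$); $\operatorname{supp}(f)$ is the set of monomials with nonzero coefficient. Rewriting: for $f,g$ such that some $m_g\in\operatorname{supp}(g)$ divides some $m_f\in\operatorname{supp}(f)$, i.e. $m_f=am_gb$ with $a,b\in\langle X\rangle$, and $\lambda\in R$, $f+\lambda agb$ is obtained from $f$ by a rewriting step using $g$; $f$ can be rewritten to $h$ using $G$ if there is a finite chain $f=f_0,f_1,\dots,f_n=h$ where each $f_i$ is obtained from $f_{i-1}$ by a rewriting step using some element of $G$. A labelled quiver $Q=(V,E,X,s,t,l)$ has vertices $V$, edges $E$, source/target maps $s,t:E\to V$ and labelling $l:E\to X$. A nonempty path $p=e_n\cdots e_1$ (with $s(e_{i+1})=t(e_i)$) has label $l(e_n)\cdots l(e_1)$, source $s(e_1)$, target $t(e_n)$; each vertex $v$ has an empty path with label $1$ and source and target $v$. For a monomial $m$, $\sigma(m)=\{(s(p),t(p)) : p \text{ a path with } l(p)=m\}$; for a polynomial $f$, $\sigma(f)=\bigcap_{m\in\operatorname{supp}(f)}\sigma(m)$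 (so $\sigma(0)=V\times V$). $f$ is compatible with $Q$ if $\sigma(f)\neq\emptyset$, and uniformly compatible if it is compatible and all $m\in\operatorname{supp}(f)$ have the same set $\sigma(m)$; $R\langle X\rangle_Q$ is the set of uniformly compatible polynomials. For $F\subseteq R\langle X\rangle_Q$, a polynomial $f$ is a $Q$-consequence of $F$ if $f$ is compatible with $Q$ and there are finitely many $a_i,b_i\in R\langle X\rangle_Q$ and $f_i\in F$ with $f=\sum_i a_if_ib_i$ and $\sigma(a_if_ib_i)\supseteq\sigma(f)$ for every $i$ (the empty sum is allowed). *)

theory Defs
  imports Main
begin

text \<open>Noncommutative polynomials over a commutative ring 'r in indeterminates of type 'x:
  coefficient functions on words (lists over 'x) with finite support.\<close>

type_synonym ('x, 'r) ncpoly = "'x list \<Rightarrow> 'r"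

definition ncpoly :: "('x, 'r::comm_ring_1) ncpoly \<Rightarrow> bool" where
  "ncpoly f \<longleftrightarrow> finite {w. f w \<noteq> 0}"

definition supp :: "('x, 'r::comm_ring_1) ncpoly \<Rightarrow> 'x list set" where
  "supp f = {w. f w \<noteq> 0}"

definition nczero :: "('x, 'r::comm_ring_1) ncpoly" where
  "nczero = (\<lambda>_. 0)"

definition ncadd :: "('x, 'r::comm_ring_1) ncpoly \<Rightarrow> ('x, 'r) ncpoly \<Rightarrow> ('x, 'r) ncpoly" where
  "ncadd f g = (\<lambda>w. f w + g w)"

definition ncscale :: "'r::comm_ring_1 \<Rightarrow> ('x, 'r) ncpoly \<Rightarrow> ('x, 'r) ncpoly" where
  "ncscale c f = (\<lambda>w. c * f w)"

definition ncmul :: "('x, 'r::comm_ring_1) ncpoly \<Rightarrow> ('x, 'r) ncpoly \<Rightarrow> ('x, 'r) ncpoly" where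
  "ncmul f g = (\<lambda>w. \<Sum>i\<le>length w. f (take i w) * g (drop i w))"

definition ncmon :: "'x list \<Rightarrow> ('x, 'r::comm_ring_1) ncpoly" where
  "ncmon m = (\<lambda>w. if w = m then 1 else 0)"

definition ncsum_list :: "('x, 'r::comm_ring_1) ncpoly list \<Rightarrow> ('x, 'r) ncpoly" where
  "ncsum_list ps = foldr ncadd ps nczero"

inductive_set nc_ideal :: "('x, 'r::comm_ring_1) ncpoly set \<Rightarrow> ('x, 'r) ncpoly set"
  for F where
  zero: "nczero \<in> nc_ideal F"
| gen: "\<lbrakk>g \<in> F; ncpoly a; ncpoly b\<rbrakk> \<Longrightarrow> ncmul (ncmul a g) b \<in> nc_ideal F"
| add: "\<lbrakk>p \<in> nc_ideal F; q \<in> nc_ideal F\<rbrakk> \<Longrightarrow> ncadd p q \<in> nc_ideal F"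

definition rewrite_step :: "('x, 'r::comm_ring_1) ncpoly set \<Rightarrow> ('x, 'r) ncpoly \<Rightarrow> ('x, 'r) ncpoly \<Rightarrow> bool" where
  "rewrite_step G f f' \<longleftrightarrow>
     (\<exists>g\<in>G. \<exists>mg\<in>supp g. \<exists>mf\<in>supp f. \<exists>a b. \<exists>c::'r.
        mf = a @ mg @ b \<and> f' = ncadd f (ncscale c (ncmul (ncmul (ncmon a) g) (ncmon b))))"

definition rewrites_to :: "('x, 'r::comm_ring_1) ncpoly set \<Rightarrow> ('x, 'r) ncpoly \<Rightarrow> ('x, 'r) ncpoly \<Rightarrow> bool" where
  "rewrites_to G f h \<longleftrightarrow> (rewrite_step G)\<^sup>*\<^sup>* f h"

text \<open>A path e_n ... e_1 is the list [e_1, ..., e_n] of edges; its label is the word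
  l(e_n) ... l(e_1), i.e. rev (map l p); source s(e_1), target t(e_n).\<close>

definition quiver :: "'v set \<Rightarrow> 'e set \<Rightarrow> ('e \<Rightarrow> 'v) \<Rightarrow> ('e \<Rightarrow> 'v) \<Rightarrow> bool" where
  "quiver V E s t \<longleftrightarrow> (\<forall>e\<in>E. s e \<in> V \<and> t e \<in> V)"

definition is_path :: "'e set \<Rightarrow> ('e \<Rightarrow> 'v) \<Rightarrow> ('e \<Rightarrow> 'v) \<Rightarrow> 'e list \<Rightarrow> bool" where
  "is_path E s t p \<longleftrightarrow> p \<noteq> [] \<and> set p \<subseteq> E \<and>
     (\<forall>i. Suc i < length p \<longrightarrow> s (p ! Suc i) = t (p ! i))"

definition sigma_mon :: "'v set \<Rightarrow> 'e set \<Rightarrow> ('e \<Rightarrow> 'v) \<Rightarrow> ('e \<Rightarrow> 'v) \<Rightarrow> ('e \<Rightarrow> 'x)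
    \<Rightarrow> 'x list \<Rightarrow> ('v \<times> 'v) set" where
  "sigma_mon V E s t l m =
     {(v, v) | v. v \<in> V \<and> m = []} \<union>
     {(s (hd p), t (last p)) | p. is_path E s t p \<and> rev (map l p) = m}"

definition sigma :: "'v set \<Rightarrow> 'e set \<Rightarrow> ('e \<Rightarrow> 'v) \<Rightarrow> ('e \<Rightarrow> 'v) \<Rightarrow> ('e \<Rightarrow> 'x)
    \<Rightarrow> ('x, 'r::comm_ring_1) ncpoly \<Rightarrow> ('v \<times> 'v) set" where
  "sigma V E s t l f = {vw \<in> V \<times> V. \<forall>m\<in>supp f. vw \<in> sigma_mon V E s t l m}"

definition compatible :: "'v set \<Rightarrow> 'e set \<Rightarrow> ('e \<Rightarrow> 'v) \<Rightarrow> ('e \<Rightarrow> 'v) \<Rightarrow> ('e \<Rightarrow> 'x)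
    \<Rightarrow> ('x, 'r::comm_ring_1) ncpoly \<Rightarrow> bool" where
  "compatible V E s t l f \<longleftrightarrow> sigma V E s t l f \<noteq> {}"

definition unif_compatible :: "'v set \<Rightarrow> 'e set \<Rightarrow> ('e \<Rightarrow> 'v) \<Rightarrow> ('e \<Rightarrow> 'v) \<Rightarrow> ('e \<Rightarrow> 'x)
    \<Rightarrow> ('x, 'r::comm_ring_1) ncpoly \<Rightarrow> bool" where
  "unif_compatible V E s t l f \<longleftrightarrow> compatible V E s t l f \<and>
     (\<forall>m\<in>supp f. \<forall>m'\<in>supp f. sigma_mon V E s t l m = sigma_mon V E s t l m')"

definition ncpoly_Q :: "'v set \<Rightarrow> 'e set \<Rightarrow> ('e \<Rightarrow> 'v) \<Rightarrow> ('e \<Rightarrow> 'v) \<Rightarrow> ('e \<Rightarrow> 'x)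
    \<Rightarrow> ('x, 'r::comm_ring_1) ncpoly set" where
  "ncpoly_Q V E s t l = {f. ncpoly f \<and> unif_compatible V E s t l f}"

definition Q_consequence :: "'v set \<Rightarrow> 'e set \<Rightarrow> ('e \<Rightarrow> 'v) \<Rightarrow> ('e \<Rightarrow> 'v) \<Rightarrow> ('e \<Rightarrow> 'x)
    \<Rightarrow> ('x, 'r::comm_ring_1) ncpoly set \<Rightarrow> ('x, 'r) ncpoly \<Rightarrow> bool" where
  "Q_consequence V E s t l F f \<longleftrightarrow> compatible V E s t l f \<and>
     (\<exists>cs :: (('x, 'r) ncpoly \<times> ('x, 'r) ncpoly \<times> ('x, 'r) ncpoly) list.
        (\<forall>(a, g, b) \<in> set cs. a \<in> ncpoly_Q V E s t l \<and> b \<in> ncpoly_Q V E s t l \<and> g \<in> F \<and>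
            sigma V E s t l f \<subseteq> sigma V E s t l (ncmul (ncmul a g) b)) \<and>
        f = ncsum_list (map (\<lambda>(a, g, b). ncmul (ncmul a g) b) cs))"

end

theory Submission
  imports Defs
begin


lemma ncsum_list_app: "ncsum_list ps w = (\<Sum>p\<leftarrow>ps. p w)"
  by (induction ps) (auto simp: ncsum_list_def ncadd_def nczero_def)

lemma ncmul_add_left: "ncmul (ncadd f g) h = ncadd (ncmul f h) (ncmul g h)"
  by (rule ext) (simp add: ncmul_def ncadd_def sum.distrib distrib_right)

lemma ncmul_add_right: "ncmul h (ncadd f g) = ncadd (ncmul h f) (ncmul h g)"
  by (rule ext) (simp add: ncmul_def ncadd_def sum.distrib distrib_left)

lemma ncmul_zero_left: "ncmul nczero h = nczero"
  by (rule ext) (simp add: ncmul_def nczero_def)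

lemma ncmul_zero_right: "ncmul h nczero = nczero"
  by (rule ext) (simp add: ncmul_def nczero_def)

lemma ncmul_scale_left: "ncmul (ncscale c f) h = ncscale c (ncmul f h)"
  by (rule ext) (simp add: ncmul_def ncscale_def sum_distrib_left mult.assoc)

lemma ncmul_scale_right: "ncmul h (ncscale c f) = ncscale c (ncmul h f)"
  by (rule ext) (simp add: ncmul_def ncscale_def sum_distrib_left mult.left_commute)

lemma ncmul_sum_left: "ncmul (ncsum_list ps) h = ncsum_list (map (\<lambda>p. ncmul p h) ps)"
  by (induction ps) (simp_all add: ncsum_list_def ncmul_zero_left ncmul_add_left)

lemma ncmul_sum_right: "ncmul h (ncsum_list ps) = ncsum_list (map (\<lambda>p. ncmul h p) ps)"
  by (induction ps) (simp_all add: ncsum_list_def ncmul_zero_right ncmul_add_right)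

lemma ncsum_list_append: "ncsum_list (xs @ ys) = ncadd (ncsum_list xs) (ncsum_list ys)"
  by (rule ext) (simp add: ncsum_list_app ncadd_def)

lemma ncmul_mon_left:
  "ncmul (ncmon u) g x = (if take (length u) x = u then g (drop (length u) x) else 0)"
proof -
  have "ncmul (ncmon u) g x = (\<Sum>i\<le>length x. if i = length u then (if take (length u) x = u then g (drop (length u) x) else 0) else 0)"
    unfolding ncmul_def ncmon_def
    by (rule sum.cong) auto
  also have "\<dots> = (if take (length u) x = u then g (drop (length u) x) else 0)"
    by (cases "length u \<le> length x") (auto dest: arg_cong[of _ _ length])
  finally show ?thesis .
qed

lemma ncmul_mon_right:
  "ncmul g (ncmon w) x = (if drop (length x - length w) x = w then g (take (length x - length w) x) else 0)"
proof -
  have "ncmul g (ncmon w) x = (\<Sum>i\<le>length x. if i = length x - length w then (if drop (length x - length w) x = w then g (take (length x - length w) x) else 0) else 0)"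
    unfolding ncmul_def ncmon_def
    by (rule sum.cong) auto
  also have "\<dots> = (if drop (length x - length w) x = w then g (take (length x - length w) x) else 0)"
    by simp
  finally show ?thesis .
qed



fun termT :: "'r::comm_ring_1 \<times> 'x list \<times> ('x, 'r) ncpoly \<times> 'x list \<Rightarrow> ('x, 'r) ncpoly" where
  "termT (c, u, g, w) = ncscale c (ncmul (ncmul (ncmon u) g) (ncmon w))"

definition repF :: "('x, 'r::comm_ring_1) ncpoly set \<Rightarrow> ('x, 'r) ncpoly set" where
  "repF F = {ncsum_list (map termT L) | L. \<forall>(c,u,g,w)\<in>set L. g \<in> F}"

lemma termT_alt: "termT (c, u, g, w) = ncmul (ncmul (ncscale c (ncmon u)) g) (ncmon w)"
  by (simp add: ncmul_scale_left)

lemma termT_supp: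
  assumes "termT (c, u, g, w) x \<noteq> 0"
  shows "c \<noteq> 0 \<and> (\<exists>mg. x = u @ mg @ w \<and> g mg \<noteq> 0)"
proof -
  let ?k = "length x - length w"
  have 1: "c * ncmul (ncmul (ncmon u) g) (ncmon w) x \<noteq> 0" using assms by (simp add: ncscale_def)
  hence c: "c \<noteq> 0" by auto
  from 1 have d: "drop ?k x = w" and 2: "ncmul (ncmon u) g (take ?k x) \<noteq> 0"
    by (auto simp: ncmul_mon_right split: if_splits)
  from 2 have e: "take (length u) (take ?k x) = u" and 3: "g (drop (length u) (take ?k x)) \<noteq> 0"
    by (auto simp: ncmul_mon_left split: if_splits)
  have "x = u @ drop (length u) (take ?k x) @ w"
  proof -
    have "x = take ?k x @ w" using d by (metis append_take_drop_id)
    also have "take ?k x = u @ drop (length u) (take ?k x)" using e by (metis append_take_drop_id)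
    finally show ?thesis by simp
  qed
  thus ?thesis using c 3 by blast
qed

lemma ncpoly_scale_mon: "ncpoly (ncscale c (ncmon u))"
proof -
  have "{w. ncscale c (ncmon u) w \<noteq> 0} \<subseteq> {u}" by (auto simp: ncscale_def ncmon_def)
  thus ?thesis unfolding ncpoly_def using finite_subset by blast
qed

lemma ncpoly_mon: "ncpoly (ncmon u)"
proof -
  have "{w. ncmon u w \<noteq> (0::'b::comm_ring_1)} \<subseteq> {u}" by (auto simp: ncmon_def)
  thus ?thesis unfolding ncpoly_def using finite_subset by blast
qed

lemma repF_ideal: "f \<in> repF F \<Longrightarrow> f \<in> nc_ideal F"
proof -
  have "\<forall>(c,u,g,w)\<in>set L. g \<in> F \<Longrightarrow> ncsum_list (map termT L) \<in> nc_ideal F" for L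
  proof (induction L)
    case Nil
    then show ?case by (simp add: ncsum_list_def nc_ideal.zero)
  next
    case (Cons a L)
    obtain c u g w where a: "a = (c,u,g,w)" by (cases a) auto
    have "termT a \<in> nc_ideal F" unfolding a termT_alt
      using Cons.prems a by (auto intro!: nc_ideal.gen ncpoly_scale_mon ncpoly_mon)
    then show ?case using Cons by (auto simp: ncsum_list_def intro: nc_ideal.add)
  qed
  thus "f \<in> repF F \<Longrightarrow> f \<in> nc_ideal F" unfolding repF_def by auto
qed

lemma ncpoly_expand:
  assumes "ncpoly a"
  obtains us where "a = ncsum_list (map (\<lambda>u. ncscale (a u) (ncmon u)) us)"
proof -
  obtain us where us: "distinct us" "set us = supp a"
    using assms finite_distinct_list unfolding ncpoly_def supp_def by blast
  have "a = ncsum_list (map (\<lambda>u. ncscale (a u) (ncmon u)) us)"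
  proof
    fix x
    have "ncsum_list (map (\<lambda>u. ncscale (a u) (ncmon u)) us) x = (\<Sum>u\<in>set us. a u * (if x = u then 1 else 0))"
      using us(1) by (simp add: ncsum_list_app ncscale_def ncmon_def o_def sum_list_distinct_conv_sum_set eq_commute)
    also have "\<dots> = (\<Sum>u\<in>set us. if x = u then a x else 0)"
      by (rule sum.cong) auto
    also have "\<dots> = (if x \<in> set us then a x else 0)" by (simp add: sum.delta)
    also have "\<dots> = a x" using us(2) by (auto simp: supp_def)
    finally show "a x = ncsum_list (map (\<lambda>u. ncscale (a u) (ncmon u)) us) x" by simp
  qed
  thus ?thesis using that by blast
qed

lemma sum_list_concat': "sum_list (concat xss) = sum_list (map sum_list xss)"
  by (induction xss) auto

lemma ideal_repF: "f \<in> nc_ideal F \<Longrightarrow> f \<in> repF F"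
proof (induction rule: nc_ideal.induct)
  case zero
  then show ?case unfolding repF_def by (rule CollectI, intro exI[of _ "[]"]) (simp add: ncsum_list_def)
next
  case (gen g a b)
  obtain us where ua: "a = ncsum_list (map (\<lambda>u. ncscale (a u) (ncmon u)) us)"
    using ncpoly_expand[OF gen(2)] by blast
  obtain ws where wb: "b = ncsum_list (map (\<lambda>w. ncscale (b w) (ncmon w)) ws)"
    using ncpoly_expand[OF gen(3)] by blast
  define L where "L = concat (map (\<lambda>w. map (\<lambda>u. (a u * b w, u, g, w)) us) ws)"
  have "ncmul (ncmul a g) b = ncmul (ncmul (ncsum_list (map (\<lambda>u. ncscale (a u) (ncmon u)) us)) g) (ncsum_list (map (\<lambda>w. ncscale (b w) (ncmon w)) ws))"
    by (rule arg_cong2[where f="\<lambda>x y. ncmul (ncmul x g) y"]) (fact ua, fact wb)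
  also have "\<dots> = ncsum_list (map termT L)"
    apply (simp add: ncmul_sum_left ncmul_sum_right ncmul_scale_left ncmul_scale_right o_def L_def)
    apply (rule ext)
    apply (simp add: ncsum_list_app ncscale_def o_def map_concat sum_list_concat' sum_list_const_mult mult_ac)
    done
  finally have "ncmul (ncmul a g) b = ncsum_list (map termT L)" .
  moreover have "\<forall>(c,u,g',w)\<in>set L. g' \<in> F" unfolding L_def using gen(1) by auto
  ultimately show ?case unfolding repF_def by blast
next
  case (add p q)
  then obtain L1 L2 where "p = ncsum_list (map termT L1)" "\<forall>(c,u,g,w)\<in>set L1. g \<in> F"
     "q = ncsum_list (map termT L2)" "\<forall>(c,u,g,w)\<in>set L2. g \<in> F" unfolding repF_def by blast
  then show ?case unfolding repF_def
    by (intro CollectI exI[of _ "L1 @ L2"]) (auto simp: ncsum_list_append)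
qed



lemma repF_rewrites:
  "\<forall>(c,u,g,w)\<in>set L. g \<in> F \<Longrightarrow> rewrites_to F (ncsum_list (map termT L)) nczero"
proof (induction "length L" arbitrary: L rule: less_induct)
  case less
  show ?case
  proof (cases "ncsum_list (map termT L) = nczero")
    case True
    then show ?thesis by (simp add: rewrites_to_def)
  next
    case False
    then obtain x where x: "ncsum_list (map termT L) x \<noteq> 0" by (auto simp: nczero_def)
    have "\<exists>t\<in>set L. termT t x \<noteq> 0"
    proof (rule ccontr)
      assume "\<not> ?thesis"
      hence "(\<Sum>p\<leftarrow>map termT L. p x) = 0" by (induction L) auto
      thus False using x by (simp add: ncsum_list_app)
    qed
    then obtain t where t: "t \<in> set L" "termT t x \<noteq> 0" by blast
    obtain L1 L2 where L: "L = L1 @ t # L2" using split_list[OF t(1)] by blast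
    obtain c u g w where tc: "t = (c,u,g,w)" by (cases t) auto
    from termT_supp[of c u g w x] t(2) tc obtain mg where mg: "x = u @ mg @ w" "g mg \<noteq> 0" by auto
    have gF: "g \<in> F" using less.prems t(1) tc by auto
    have eq: "ncadd (ncsum_list (map termT L)) (ncscale (-c) (ncmul (ncmul (ncmon u) g) (ncmon w)))
      = ncsum_list (map termT (L1 @ L2))"
      by (rule ext) (simp add: L tc ncsum_list_app ncadd_def ncscale_def)
    have step: "rewrite_step F (ncsum_list (map termT L)) (ncsum_list (map termT (L1 @ L2)))"
      unfolding rewrite_step_def
      apply (rule bexI[OF _ gF])
      apply (rule bexI[of _ mg])
       apply (rule bexI[of _ x])
        apply (intro exI conjI)
         apply (rule mg(1))
        apply (rule eq[symmetric])
      using x mg by (auto simp: supp_def)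
    have "rewrites_to F (ncsum_list (map termT (L1 @ L2))) nczero"
      using less.hyps[of "L1 @ L2"] less.prems L by auto
    then show ?thesis using step unfolding rewrites_to_def
      by (meson converse_rtranclp_into_rtranclp)
  qed
qed

lemma step_repF:
  assumes "rewrite_step F f f'" "f' \<in> repF F"
  shows "f \<in> repF F"
proof -
  from assms(1) obtain g mg mf a b c where g: "g \<in> F"
    and f': "f' = ncadd f (ncscale c (ncmul (ncmul (ncmon a) g) (ncmon b)))"
    unfolding rewrite_step_def by blast
  from assms(2) obtain L where L: "f' = ncsum_list (map termT L)" "\<forall>(c,u,g,w)\<in>set L. g \<in> F"
    unfolding repF_def by blast
  have "f = ncsum_list (map termT ((-c, a, g, b) # L))"
  proof
    fix x
    have "f' x = ncsum_list (map termT L) x" using L(1) by simp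
    hence "f x + c * ncmul (ncmul (ncmon a) g) (ncmon b) x = (\<Sum>p\<leftarrow>map termT L. p x)"
      by (simp add: f' ncadd_def ncscale_def ncsum_list_app)
    thus "f x = ncsum_list (map termT ((-c, a, g, b) # L)) x"
      by (simp add: ncsum_list_app ncscale_def algebra_simps)
  qed
  moreover have "\<forall>(c,u,g,w)\<in>set ((-c, a, g, b) # L). g \<in> F" using L(2) g by auto
  ultimately show ?thesis unfolding repF_def by blast
qed

lemma rewrites_repF:
  assumes "rewrites_to F f nczero"
  shows "f \<in> repF F"
  using assms[unfolded rewrites_to_def]
proof (induction rule: converse_rtranclp_induct)
  case base
  then show ?case unfolding repF_def by (intro CollectI exI[of _ "[]"]) (simp add: ncsum_list_def)
next
  case (step y z)
  then show ?case using step_repF by blast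
qed



lemma is_path_Cons:
  "is_path E s t (e # p) \<longleftrightarrow> e \<in> E \<and> (p = [] \<or> (is_path E s t p \<and> s (hd p) = t e))"
proof (cases p)
  case Nil
  then show ?thesis by (simp add: is_path_def)
next
  case (Cons a q)
  have "(\<forall>i. Suc i < length (e # a # q) \<longrightarrow> s ((e # a # q) ! Suc i) = t ((e # a # q) ! i))
     \<longleftrightarrow> s a = t e \<and> (\<forall>i. Suc i < length (a # q) \<longrightarrow> s ((a # q) ! Suc i) = t ((a # q) ! i))"
    (is "?L \<longleftrightarrow> ?R")
  proof
    assume ?L
    then show ?R by (metis Suc_less_eq length_Cons nth_Cons_0 nth_Cons_Suc zero_less_Suc)
  next
    assume r: ?R
    show ?L
    proof (intro allI impI)
      fix i assume "Suc i < length (e # a # q)"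
      then show "s ((e # a # q) ! Suc i) = t ((e # a # q) ! i)"
        using r by (cases i) auto
    qed
  qed
  then show ?thesis using Cons unfolding is_path_def by auto
qed

lemma sm_Nil: "sigma_mon V E s t l [] = Id_on V"
  unfolding sigma_mon_def is_path_def by (auto simp: Id_on_def)

lemma sm_sub: "quiver V E s t \<Longrightarrow> sigma_mon V E s t l m \<subseteq> V \<times> V"
  unfolding sigma_mon_def quiver_def is_path_def
  by (auto; metis hd_in_set last_in_set subsetD)

lemma sm_snoc:
  assumes q: "quiver V E s t"
  shows "sigma_mon V E s t l (m @ [x]) = {(s e, t e) | e. e \<in> E \<and> l e = x} O sigma_mon V E s t l m"
proof
  show "sigma_mon V E s t l (m @ [x]) \<subseteq> {(s e, t e) | e. e \<in> E \<and> l e = x} O sigma_mon V E s t l m"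
  proof
    fix pr assume "pr \<in> sigma_mon V E s t l (m @ [x])"
    then obtain p where p: "is_path E s t p" "rev (map l p) = m @ [x]" "pr = (s (hd p), t (last p))"
      unfolding sigma_mon_def by auto
    then obtain e p' where ep: "p = e # p'" unfolding is_path_def by (cases p) auto
    have le: "l e = x" and m: "rev (map l p') = m" using p(2) ep by auto
    have eE: "e \<in> E" using p(1) ep is_path_Cons by metis
    show "pr \<in> {(s e, t e) | e. e \<in> E \<and> l e = x} O sigma_mon V E s t l m"
    proof (cases "p' = []")
      case True
      then have "(t e, t e) \<in> sigma_mon V E s t l m" using m eE q
        unfolding sigma_mon_def quiver_def by auto
      then show ?thesis using p(3) ep True eE le by auto
    next
      case False
      then have pp: "is_path E s t p'" "s (hd p') = t e" using p(1) ep is_path_Cons by metis+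
      then have "(t e, t (last p')) \<in> sigma_mon V E s t l m" using m unfolding sigma_mon_def by force
      then show ?thesis using p(3) ep False eE le by auto
    qed
  qed
next
  show "{(s e, t e) | e. e \<in> E \<and> l e = x} O sigma_mon V E s t l m \<subseteq> sigma_mon V E s t l (m @ [x])"
  proof
    fix pr assume "pr \<in> {(s e, t e) | e. e \<in> E \<and> l e = x} O sigma_mon V E s t l m"
    then obtain e c where e: "e \<in> E" "l e = x" "pr = (s e, c)" and ec: "(t e, c) \<in> sigma_mon V E s t l m"
      by auto
    show "pr \<in> sigma_mon V E s t l (m @ [x])"
    proof (cases "m = []")
      case True
      then have "c = t e" using ec unfolding sigma_mon_def is_path_def by auto
      moreover have "is_path E s t [e]" using e is_path_Cons by metis
      ultimately show ?thesis using e True unfolding sigma_mon_def by force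
    next
      case False
      then obtain p' where p': "is_path E s t p'" "rev (map l p') = m" "t e = s (hd p')" "c = t (last p')"
        using ec unfolding sigma_mon_def by auto
      have "p' \<noteq> []" using p'(1) unfolding is_path_def by auto
      then have "is_path E s t (e # p')" using p' e is_path_Cons by metis
      moreover have "rev (map l (e # p')) = m @ [x]" using p' e by simp
      ultimately show ?thesis using e p' \<open>p' \<noteq> []\<close> unfolding sigma_mon_def by force
    qed
  qed
qed

lemma sm_app:
  assumes q: "quiver V E s t"
  shows "sigma_mon V E s t l (m1 @ m2) = sigma_mon V E s t l m2 O sigma_mon V E s t l m1"
proof (induction m2 rule: rev_induct)
  case Nil
  have "sigma_mon V E s t l m1 = Id_on V O sigma_mon V E s t l m1"
    using sm_sub[OF q, of l m1] by auto
  then show ?case by (simp add: sm_Nil)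
next
  case (snoc x xs)
  have "sigma_mon V E s t l (m1 @ xs @ [x]) = sigma_mon V E s t l ((m1 @ xs) @ [x])" by simp
  also have "\<dots> = {(s e, t e) | e. e \<in> E \<and> l e = x} O (sigma_mon V E s t l xs O sigma_mon V E s t l m1)"
    using sm_snoc[OF q, of l "m1 @ xs" x] snoc by simp
  also have "\<dots> = sigma_mon V E s t l (xs @ [x]) O sigma_mon V E s t l m1"
    using sm_snoc[OF q, of l xs x] by (simp add: O_assoc)
  finally show ?case .
qed



lemma sum_list_filter_zero:
  "(\<forall>t\<in>set L. \<not> P t \<longrightarrow> h t = (0::'a::comm_monoid_add)) \<Longrightarrow> sum_list (map h L) = sum_list (map h (filter P L))"
  by (induction L) auto

lemma sum_list_all_zero:
  "(\<forall>t\<in>set L. h t = (0::'a::comm_monoid_add)) \<Longrightarrow> sum_list (map h L) = 0"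
  by (induction L) auto

lemma unif_single:
  assumes q: "quiver V E s t" and h: "supp h \<subseteq> {u}" and ne: "sigma_mon V E s t l u \<noteq> {}"
  shows "unif_compatible V E s t l h"
proof -
  have "sigma_mon V E s t l u \<subseteq> sigma V E s t l h"
    using sm_sub[OF q, of l u] h unfolding sigma_def by auto
  then show ?thesis using ne h unfolding unif_compatible_def compatible_def by auto
qed

lemma termT_uniform:
  assumes q: "quiver V E s t" and g: "g \<in> ncpoly_Q V E s t l"
    and x: "x \<in> supp (termT (c,u,g,w))" and y: "y \<in> supp (termT (c,u,g,w))"
  shows "sigma_mon V E s t l x = sigma_mon V E s t l y"
proof -
  obtain mg where mg: "x = u @ mg @ w" "g mg \<noteq> 0" using termT_supp[of c u g w x] x unfolding supp_def by blast
  obtain mg' where mg': "y = u @ mg' @ w" "g mg' \<noteq> 0" using termT_supp[of c u g w y] y unfolding supp_def by blast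
  have "sigma_mon V E s t l mg = sigma_mon V E s t l mg'"
  proof -
    have u: "unif_compatible V E s t l g" using g unfolding ncpoly_Q_def by blast
    have "mg \<in> supp g" "mg' \<in> supp g" using mg(2) mg'(2) unfolding supp_def by auto
    then show ?thesis using u unfolding unif_compatible_def by blast
  qed
  moreover have ex: "sigma_mon V E s t l (u @ m @ w) = (sigma_mon V E s t l w O sigma_mon V E s t l m) O sigma_mon V E s t l u" for m
    using sm_app[OF q, of l u "m @ w"] sm_app[OF q, of l m w] by (simp only:)
  ultimately show ?thesis by (simp only: mg(1) mg'(1) ex)
qed

lemma map_termT_eq: "map (\<lambda>(a, g, b). ncmul (ncmul a g) b) (map (\<lambda>(c,u,g,w). (ncscale c (ncmon u), g, (ncmon w :: ('x, 'r::comm_ring_1) ncpoly))) L) = map termT L"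
  by (induction L) (auto simp: ncmul_scale_left)

lemma repF_Qcons:
  fixes F :: "('x, 'r::comm_ring_1) ncpoly set" and f :: "('x, 'r) ncpoly"
  assumes q: "quiver V E s t" and F: "F \<subseteq> ncpoly_Q V E s t l"
    and c: "compatible V E s t l f" and r: "f \<in> repF F"
  shows "Q_consequence V E s t l F f"
proof -
  let ?SM = "sigma_mon V E s t l"
  let ?S = "sigma V E s t l f"
  from r obtain L where L: "f = ncsum_list (map termT L)" "\<forall>(c,u,g,w)\<in>set L. g \<in> F"
    unfolding repF_def by blast
  define keep where "keep = (\<lambda>tt :: 'r \<times> 'x list \<times> ('x, 'r) ncpoly \<times> 'x list. termT tt \<noteq> nczero \<and> (\<forall>m\<in>supp (termT tt). ?S \<subseteq> ?SM m))"
  have suppf: "?S \<subseteq> ?SM x" if "f x \<noteq> 0" for x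
    using that unfolding sigma_def supp_def by auto
  have fL': "f = ncsum_list (map termT (filter keep L))"
  proof
    fix x
    show "f x = ncsum_list (map termT (filter keep L)) x"
    proof (cases "?S \<subseteq> ?SM x")
      case True
      have "\<forall>tt\<in>set L. \<not> keep tt \<longrightarrow> termT tt x = 0"
      proof (intro ballI impI)
        fix tt assume tt: "tt \<in> set L" "\<not> keep tt"
        obtain c u g w where tc: "tt = (c,u,g,w)" by (cases tt) auto
        have gQ: "g \<in> ncpoly_Q V E s t l" using L(2) tt(1) tc F by auto
        show "termT tt x = 0"
        proof (rule ccontr)
          assume nz: "termT tt x \<noteq> 0"
          then have "termT tt \<noteq> nczero" by (auto simp: nczero_def)
          with tt(2) obtain m where m: "m \<in> supp (termT tt)" "\<not> ?S \<subseteq> ?SM m"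
            unfolding keep_def by auto
          have "?SM m = ?SM x" using termT_uniform[OF q gQ, of m c u w x] m(1) nz tc
            by (auto simp: supp_def)
          then show False using m(2) True by simp
        qed
      qed
      then have "(\<Sum>p\<leftarrow>map termT L. p x) = (\<Sum>p\<leftarrow>map termT (filter keep L). p x)"
        using sum_list_filter_zero[of L keep "\<lambda>tt. termT tt x"] by (simp add: o_def)
      then show ?thesis using L(1) by (simp add: ncsum_list_app)
    next
      case False
      then have "f x = 0" using suppf by blast
      moreover have "(\<Sum>p\<leftarrow>map termT (filter keep L). p x) = 0"
        using sum_list_all_zero[of "filter keep L" "\<lambda>tt. termT tt x"] False
        unfolding keep_def supp_def by (auto simp: o_def)
      ultimately show ?thesis by (simp add: ncsum_list_app)
    qed
  qed
  define cs where "cs = map (\<lambda>(c,u,g,w). (ncscale c (ncmon u), g, (ncmon w :: ('x, 'r) ncpoly))) (filter keep L)"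
  have eqcs: "map (\<lambda>(a, g, b). ncmul (ncmul a g) b) cs = map termT (filter keep L)"
    unfolding cs_def by (rule map_termT_eq)
  have Sne: "?S \<noteq> {}" using c unfolding compatible_def .
  have good: "\<forall>(a, g, b) \<in> set cs. a \<in> ncpoly_Q V E s t l \<and> b \<in> ncpoly_Q V E s t l \<and> g \<in> F \<and>
            ?S \<subseteq> sigma V E s t l (ncmul (ncmul a g) b)"
  proof
    fix abg assume "abg \<in> set cs"
    then obtain c u g w where tt: "(c,u,g,w) \<in> set L" "keep (c,u,g,w)"
      and abg: "abg = (ncscale c (ncmon u), g, ncmon w)"
      unfolding cs_def by auto
    have gF: "g \<in> F" using L(2) tt(1) by auto
    have tnz: "termT (c,u,g,w) \<noteq> nczero" using tt(2) unfolding keep_def by (simp only: simp_thms)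
    have "\<exists>x. termT (c,u,g,w) x \<noteq> 0"
    proof (rule ccontr)
      assume "\<not> ?thesis"
      then have "termT (c,u,g,w) = nczero" unfolding nczero_def by (intro ext) blast
      then show False using tnz by blast
    qed
    then obtain x where x: "termT (c,u,g,w) x \<noteq> 0" by blast
    then obtain mg where mg: "x = u @ mg @ w" using termT_supp by blast
    have "?S \<subseteq> ?SM x" using tt(2) x unfolding keep_def supp_def by auto
    then have "?SM x \<noteq> {}" using Sne by auto
    then have ne: "?SM u \<noteq> {}" "?SM w \<noteq> {}"
      using mg sm_app[OF q, of l u "mg @ w"] sm_app[OF q, of l "u @ mg" w] by auto
    have sa: "supp (ncscale c (ncmon u)) \<subseteq> {u}" by (auto simp: supp_def ncscale_def ncmon_def)
    have sb: "supp (snd (snd abg)) \<subseteq> {w}" using abg by (auto simp: supp_def ncmon_def)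
    have a: "ncscale c (ncmon u) \<in> ncpoly_Q V E s t l"
      unfolding ncpoly_Q_def using ncpoly_scale_mon unif_single[OF q sa ne(1)] by blast
    have b: "snd (snd abg) \<in> ncpoly_Q V E s t l"
      unfolding ncpoly_Q_def using unif_single[OF q sb ne(2)] abg by (simp add: ncpoly_mon)
    have "?S \<subseteq> sigma V E s t l (termT (c,u,g,w))"
      using tt(2) unfolding keep_def sigma_def by auto
    then show "case abg of (a, g, b) \<Rightarrow> a \<in> ncpoly_Q V E s t l \<and> b \<in> ncpoly_Q V E s t l \<and> g \<in> F \<and>
            ?S \<subseteq> sigma V E s t l (ncmul (ncmul a g) b)"
      using a b gF abg by (simp del: termT.simps add: termT_alt)
  qed
  have fcs: "f = ncsum_list (map (\<lambda>(a, g, b). ncmul (ncmul a g) b) cs)"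
    using fL' eqcs by simp
  show ?thesis unfolding Q_consequence_def
    using c good fcs by blast
qed


lemma Qcons_ideal:
  assumes F: "F \<subseteq> ncpoly_Q V E s t l"
    and cs: "\<forall>(a, g, b) \<in> set cs. a \<in> ncpoly_Q V E s t l \<and> b \<in> ncpoly_Q V E s t l \<and> g \<in> F"
  shows "ncsum_list (map (\<lambda>(a, g, b). ncmul (ncmul a g) b) cs) \<in> nc_ideal F"
  using cs
proof (induction cs)
  case Nil
  then show ?case by (simp add: ncsum_list_def nc_ideal.zero)
next
  case (Cons x cs)
  obtain a g b where x: "x = (a, g, b)" by (cases x) auto
  have "ncmul (ncmul a g) b \<in> nc_ideal F"
    using Cons.prems x by (intro nc_ideal.gen) (auto simp: ncpoly_Q_def)
  then show ?case using Cons x by (auto simp: ncsum_list_def intro: nc_ideal.add)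
qed

theorem theorem4p2:
  fixes V :: "'v set" and E :: "'e set" and s t :: "'e \<Rightarrow> 'v" and l :: "'e \<Rightarrow> 'x"
    and F :: "('x, 'r::comm_ring_1) ncpoly set" and f :: "('x, 'r) ncpoly"
  assumes "quiver V E s t"
    and "F \<subseteq> ncpoly_Q V E s t l"
    and "ncpoly f"
  shows "((compatible V E s t l f \<and> f \<in> nc_ideal F) \<longleftrightarrow>
          (compatible V E s t l f \<and> rewrites_to F f nczero))
       \<and> ((compatible V E s t l f \<and> rewrites_to F f nczero) \<longleftrightarrow>
          Q_consequence V E s t l F f)"
proof -
  have i2r: "rewrites_to F f nczero" if "f \<in> nc_ideal F"
  proof -
    from ideal_repF[OF that] obtain L where "f = ncsum_list (map termT L)" "\<forall>(c,u,g,w)\<in>set L. g \<in> F"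
      unfolding repF_def by blast
    then show ?thesis using repF_rewrites by blast
  qed
  have r2i: "f \<in> nc_ideal F" if "rewrites_to F f nczero"
    using rewrites_repF[OF that] repF_ideal by blast
  have r2q: "Q_consequence V E s t l F f" if "compatible V E s t l f" "rewrites_to F f nczero"
    using repF_Qcons[OF assms(1) assms(2) that(1) rewrites_repF[OF that(2)]] .
  have q2i: "compatible V E s t l f \<and> f \<in> nc_ideal F" if "Q_consequence V E s t l F f"
  proof -
    from that obtain cs where c: "compatible V E s t l f"
      and cs: "\<forall>(a, g, b) \<in> set cs. a \<in> ncpoly_Q V E s t l \<and> b \<in> ncpoly_Q V E s t l \<and> g \<in> F \<and>
            sigma V E s t l f \<subseteq> sigma V E s t l (ncmul (ncmul a g) b)"
      and fe: "f = ncsum_list (map (\<lambda>(a, g, b). ncmul (ncmul a g) b) cs)"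
      unfolding Q_consequence_def by blast
    have "\<forall>(a, g, b) \<in> set cs. a \<in> ncpoly_Q V E s t l \<and> b \<in> ncpoly_Q V E s t l \<and> g \<in> F"
      using cs by blast
    then show ?thesis using Qcons_ideal[OF assms(2)] fe c by metis
  qed
  show ?thesis using i2r r2i r2q q2i by blast
qed

end
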